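(* For every positive integer $x$, the entry in row $x$, column $0$ of $T_1$ equals the number of $1$'s in the binary representation of $x$.
   Context: For a positive integer $m$, the triangle $T_m$ is an array whose row $x$ ($x=1,2,\dots$) has $x$ entries, in columns $0,\dots,x-1$. Row $1$ is the single entry $1$. For $x>1$, row $x$ is obtained from row $x-1$ by rotating it cyclically left by $m$ positions (the entry in column $c$ of row $x-1$ moves to column $(c-m)\bmod(x-1)\in\{0,\dots,x-2\}$ of row $x$), then appending in column $x-1$ a new entry equal to $1$ plus the entry in column $0$ of row $x-1$. Here $m=1$. *)

theory Defs
  imports Main
begin

(* Row x of the triangle T_m, as a list of length x (entry in column c is row ! c).
   Indexing: T_row m 0 = row 1. *)
fun T_row0 :: "nat \<Rightarrow> nat \<Rightarrow> nat list" where
  "T_row0 m 0 = [1]"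
| "T_row0 m (Suc k) = rotate m (T_row0 m k) @ [1 + T_row0 m k ! 0]"

definition T_entry :: "nat \<Rightarrow> nat \<Rightarrow> nat \<Rightarrow> nat" where
  "T_entry m x c = T_row0 m (x - 1) ! c"

fun binary_ones :: "nat \<Rightarrow> nat" where
  "binary_ones n = (if n = 0 then 0 else n mod 2 + binary_ones (n div 2))"

declare binary_ones.simps[simp del]

end

theory Submission
  imports Defs
begin

lemma bo0: "binary_ones 0 = 0" by (subst binary_ones.simps) simp

lemma bo_even: "binary_ones (2*n) = binary_ones n"
proof (cases "n = 0")
  case True then show ?thesis by simp
next
  case False then show ?thesis by (subst binary_ones.simps) simp
qed

lemma bo_odd: "binary_ones (2*n+1) = 1 + binary_ones n"
  by (subst binary_ones.simps) simp

lemma row_form: "T_row0 1 k = map (\<lambda>c. binary_ones (k+1+c)) [0..<k+1]"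
proof (induction k)
  case 0
  have "binary_ones 1 = 1" by (subst binary_ones.simps) (simp add: bo0)
  then show ?case by simp
next
  case (Suc k)
  have up: "[0..<k+1] = 0 # map Suc [0..<k]" by (simp add: map_Suc_upt upt_conv_Cons del: upt_Suc)
  have "T_row0 1 (Suc k) = rotate1 (map (\<lambda>c. binary_ones (k+1+c)) [0..<k+1]) @ [1 + binary_ones (k+1)]"
    using Suc by (simp del: upt_Suc add: rotate1_rotate_swap)
  also have "\<dots> = map (\<lambda>c. binary_ones (k+2+c)) [0..<k] @ [binary_ones (k+1), 1 + binary_ones (k+1)]"
    unfolding up by (simp del: upt_Suc add: comp_def)
  also have "\<dots> = map (\<lambda>c. binary_ones (k+2+c)) [0..<k] @ [binary_ones (k+2+k), binary_ones (k+2+Suc k)]"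
    using bo_even[of "k+1"] bo_odd[of "k+1"] by (simp add: mult_2 del: upt_Suc)
  also have "\<dots> = map (\<lambda>c. binary_ones (Suc k+1+c)) [0..<Suc k+1]" by simp
  finally show ?case .
qed

theorem mainTheorem14:
  fixes x :: nat
  assumes "x \<ge> 1"
  shows "T_entry 1 x 0 = binary_ones x"
proof -
  obtain k where "x = Suc k" using assms by (cases x) auto
  then show ?thesis unfolding T_entry_def row_form by (simp only: nth_map) (simp del: upt_Suc)
qed

end
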